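(* Let $(a_n)_{n<0}$ be a sequence in $\mathbb{Z}((q))$ satisfying the lower bound condition, and for $j\in\mathbb{Z}$ define \[ r_j=-\sum_{k\ge|j|}a_{-k-1}\frac{(-1)^{k+j}q^{\binom{k+1}{2}+\binom{j+1}{2}}}{(q;q)_{k+j}(q;q)_{k-j}}\in\mathbb{Z}((q)). \] Then the series $\sum_{j\in\mathbb{Z}}r_j$ converges in $\mathbb{Z}((q))$ and \[ \sum_{j\in\mathbb{Z}}r_j=-a_{-1}. \]
   Context: $(a;q)_n=\prod_{i=0}^{n-1}(1-aq^i)$; $\binom{j+1}{2}=\frac{j(j+1)}{2}$ for all integers $j$. For $f\in\mathbb{Z}((q))$, $\delta(f)$ is the minimal exponent of $q$ in $f$. The lower bound condition: there is a constant $C$ with $\delta(a_n)\ge-\frac{n(n+3)}{2}+C$ for all $n<0$. Interpretation: $r_j$ is the term-by-term residue at $x=q^j$ of the inverted Habiro series $P(x)=\sum_{k\ge0}a_{-k-1}\frac{(-1)^kq^{\binom{k+1}{2}}}{(x;q)_{k+1}(qx^{-1};q)_k}$, and $a_{-1}$ (which equals $f_0$, the constant coefficient of its expansion at $x=0$) is its term-by-term residue at $x=\infty$. *)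

theory Defs
  imports "HOL-Computational_Algebra.Formal_Laurent_Series"
begin

text \<open>Z((q)) is modelled as int fls, with q = fls_X.\<close>

definition qpoch :: "int fls \<Rightarrow> nat \<Rightarrow> int fls" where
  "qpoch a n = (\<Prod>i<n. 1 - a * fls_X ^ i)"

text \<open>The reciprocal in Z((q)) (unique when it exists; (q;q)_n is a unit).\<close>
definition fls_recip :: "int fls \<Rightarrow> int fls" where
  "fls_recip f = (THE g. f * g = 1)"

text \<open>binom(j+1,2) = j(j+1)/2 for all integers j.\<close>
definition binom2 :: "int \<Rightarrow> int" where
  "binom2 j = j * (j + 1) div 2"

text \<open>Convergence in the q-adic topology of Z((q)) of the (unconditional) sum of a
  family indexed by I: for every N, all sufficiently large finite partial sums
  agree with S in all coefficients below N.\<close>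
definition fls_has_sum :: "('i \<Rightarrow> int fls) \<Rightarrow> 'i set \<Rightarrow> int fls \<Rightarrow> bool" where
  "fls_has_sum f I S \<longleftrightarrow>
     (\<forall>N::int. \<exists>J0. finite J0 \<and> J0 \<subseteq> I \<and>
        (\<forall>J. finite J \<and> J0 \<subseteq> J \<and> J \<subseteq> I \<longrightarrow> (\<forall>n<N. fls_nth (S - sum f J) n = 0)))"

definition fls_summable :: "('i \<Rightarrow> int fls) \<Rightarrow> 'i set \<Rightarrow> bool" where
  "fls_summable f I \<longleftrightarrow> (\<exists>S. fls_has_sum f I S)"

definition fls_infsum :: "('i \<Rightarrow> int fls) \<Rightarrow> 'i set \<Rightarrow> int fls" where
  "fls_infsum f I = (THE S. fls_has_sum f I S)"

definition lower_bound_cond :: "(int \<Rightarrow> int fls) \<Rightarrow> bool" where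
  "lower_bound_cond a \<longleftrightarrow> (\<exists>C::int. \<forall>n<0. a n \<noteq> 0 \<longrightarrow>
      fls_subdegree (a n) \<ge> - (n * (n + 3) div 2) + C)"

definition res_r :: "(int \<Rightarrow> int fls) \<Rightarrow> int \<Rightarrow> int fls" where
  "res_r a j = - fls_infsum (\<lambda>k. a (- k - 1) * fls_const ((-1) ^ nat (k + j))
        * fls_X_intpow (binom2 k + binom2 j)
        * fls_recip (qpoch fls_X (nat (k + j))) * fls_recip (qpoch fls_X (nat (k - j))))
      {k. k \<ge> \<bar>j\<bar>}"

end

theory Submission
  imports Defs
begin

unbundle fps_syntax





lemma sum_nth_mono:
  fixes f :: "'i \<Rightarrow> int fls"
  assumes "finite J2" "J1 \<subseteq> J2" "\<forall>i\<in>J2-J1. f i $$ n = 0"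
  shows "sum f J2 $$ n = sum f J1 $$ n"
  unfolding fls_nth_sum using assms
  by (intro sum.mono_neutral_right) auto


lemma has_sum_intro:
  fixes f :: "'i \<Rightarrow> int fls"
  assumes "\<And>N. \<exists>J0. finite J0 \<and> J0 \<subseteq> I \<and> (\<forall>i\<in>I-J0. \<forall>n<N. f i $$ n = 0)
              \<and> (\<forall>n<N. S $$ n = sum f J0 $$ n)"
  shows "fls_has_sum f I S"
  unfolding fls_has_sum_def
proof
  fix N :: int
  obtain J0 where J0: "finite J0" "J0 \<subseteq> I" "\<forall>i\<in>I-J0. \<forall>n<N. f i $$ n = 0"
     "\<forall>n<N. S $$ n = sum f J0 $$ n" using assms[of N] by metis
  show "\<exists>J0. finite J0 \<and> J0 \<subseteq> I \<and>
        (\<forall>J. finite J \<and> J0 \<subseteq> J \<and> J \<subseteq> I \<longrightarrow> (\<forall>n<N. fls_nth (S - sum f J) n = 0))"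
  proof (rule exI[of _ J0], intro conjI J0(1,2) allI impI)
    fix J n assume J: "finite J \<and> J0 \<subseteq> J \<and> J \<subseteq> I" and n: "n < N"
    have "sum f J $$ n = sum f J0 $$ n"
      using J J0(3) n by (intro sum_nth_mono) auto
    then show "fls_nth (S - sum f J) n = 0" using J0(4) n by simp
  qed
qed


lemma has_sum_coeff:
  fixes f :: "'i \<Rightarrow> int fls"
  assumes "fls_has_sum f I S" "finite J" "J \<subseteq> I" "\<forall>i\<in>I-J. \<forall>n<N. f i $$ n = 0" "n < N"
  shows "S $$ n = sum f J $$ n"
proof -
  obtain J0 where J0: "finite J0" "J0 \<subseteq> I"
    "\<forall>J. finite J \<and> J0 \<subseteq> J \<and> J \<subseteq> I \<longrightarrow> (\<forall>n<N. fls_nth (S - sum f J) n = 0)"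
    using assms(1)[unfolded fls_has_sum_def, THEN spec[of _ N]] by metis
  have "fls_nth (S - sum f (J \<union> J0)) n = 0"
    using J0(3)[rule_format, of "J \<union> J0" n] J0(1,2) assms(2,3,5) by auto
  moreover have "sum f (J \<union> J0) $$ n = sum f J $$ n"
    using assms J0 by (intro sum_nth_mono) auto
  ultimately show ?thesis by simp
qed

lemma has_sum_unique:
  fixes f :: "'i \<Rightarrow> int fls"
  assumes "fls_has_sum f I S" "fls_has_sum f I S'"
  shows "S = S'"
proof (rule fls_eqI)
  fix n
  obtain J0 where J0: "finite J0" "J0 \<subseteq> I"
    "\<forall>J. finite J \<and> J0 \<subseteq> J \<and> J \<subseteq> I \<longrightarrow> (\<forall>m<n+1. fls_nth (S - sum f J) m = 0)"
    using assms(1)[unfolded fls_has_sum_def, THEN spec[of _ "n+1"]] by metis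
  obtain J1 where J1: "finite J1" "J1 \<subseteq> I"
    "\<forall>J. finite J \<and> J1 \<subseteq> J \<and> J \<subseteq> I \<longrightarrow> (\<forall>m<n+1. fls_nth (S' - sum f J) m = 0)"
    using assms(2)[unfolded fls_has_sum_def, THEN spec[of _ "n+1"]] by metis
  have "fls_nth (S - sum f (J0 \<union> J1)) n = 0" "fls_nth (S' - sum f (J0 \<union> J1)) n = 0"
    using J0(3)[rule_format, of "J0 \<union> J1" n] J1(3)[rule_format, of "J0 \<union> J1" n] J0(1,2) J1(1,2) by auto
  then show "S $$ n = S' $$ n" by simp
qed

lemma has_sum_infsum:
  fixes f :: "'i \<Rightarrow> int fls"
  assumes "fls_has_sum f I S"
  shows "fls_infsum f I = S"
  unfolding fls_infsum_def using assms has_sum_unique by blast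

lemma has_sum_exists:
  fixes f :: "'i \<Rightarrow> int fls"
  assumes LF: "\<And>N. finite {i\<in>I. \<exists>n<N. f i $$ n \<noteq> 0}"
  shows "\<exists>S. fls_has_sum f I S"
proof -
  define B where "B N = {i\<in>I. \<exists>n<N. f i $$ n \<noteq> 0}" for N
  have finB: "finite (B N)" for N using LF B_def by simp
  define c where "c n = sum f (B (n+1)) $$ n" for n
  define g where "g = sum f (B 0)"
  define m where "m = min 0 (fls_subdegree g)"
  have c0: "c n = 0" if "n < m" for n
  proof -
    have n0: "n < 0" using that m_def by simp
    have sub: "B (n+1) \<subseteq> B 0"
    proof
      fix i assume "i \<in> B (n+1)"
      then obtain na where "i \<in> I" "na < n + 1" "f i $$ na \<noteq> 0" unfolding B_def by blast
      moreover have "na < 0" using n0 \<open>na < n + 1\<close> by simp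
      ultimately show "i \<in> B 0" unfolding B_def by blast
    qed
    have "\<forall>i\<in>B 0 - B (n+1). f i $$ n = 0" unfolding B_def by auto
    then have "c n = g $$ n" unfolding c_def g_def
      using finB sub by (intro sum_nth_mono[symmetric]) auto
    then show ?thesis using that m_def by simp
  qed
  define S where "S = fls_shift (-m) (fps_to_fls (Abs_fps (\<lambda>i. c (int i + m))))"
  have Sn: "S $$ n = c n" for n
    unfolding S_def using c0 by auto
  have "fls_has_sum f I S"
  proof (rule has_sum_intro)
    fix N
    show "\<exists>J0. finite J0 \<and> J0 \<subseteq> I \<and> (\<forall>i\<in>I-J0. \<forall>n<N. f i $$ n = 0)
              \<and> (\<forall>n<N. S $$ n = sum f J0 $$ n)"
    proof (rule exI[of _ "B N"], intro conjI)
      show "finite (B N)" by (rule finB)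
      show "B N \<subseteq> I" unfolding B_def by auto
      show "\<forall>i\<in>I - B N. \<forall>n<N. f i $$ n = 0" unfolding B_def by auto
      show "\<forall>n<N. S $$ n = sum f (B N) $$ n"
      proof (intro allI impI)
        fix n assume "n < N"
        have sub: "B (n+1) \<subseteq> B N"
        proof
          fix i assume "i \<in> B (n+1)"
          then obtain na where "i \<in> I" "na < n + 1" "f i $$ na \<noteq> 0" unfolding B_def by blast
          moreover have "na < N" using \<open>n < N\<close> \<open>na < n + 1\<close> by simp
          ultimately show "i \<in> B N" unfolding B_def by blast
        qed
        have "\<forall>i\<in>B N - B (n+1). f i $$ n = 0" unfolding B_def by auto
        then show "S $$ n = sum f (B N) $$ n" unfolding Sn c_def
          using finB sub by (intro sum_nth_mono[symmetric]) auto
      qed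
    qed
  qed
  then show ?thesis by blast
qed





lemma qp_Suc: "qpoch fls_X (Suc n) = qpoch fls_X n * (1 - fls_X ^ Suc n)"
  by (simp add: qpoch_def)

lemma qp_0: "qpoch fls_X 0 = 1"
  by (simp add: qpoch_def)

lemma qp_fps: "\<exists>P. qpoch fls_X n = fps_to_fls P \<and> P $ 0 = 1"
proof (induction n)
  case 0 then show ?case by (intro exI[of _ 1]) (simp add: qp_0)
next
  case (Suc n)
  then obtain P where P: "qpoch fls_X n = fps_to_fls P" "P $ 0 = 1" by blast
  have "qpoch fls_X (Suc n) = fps_to_fls (P * (1 - fps_X ^ Suc n))"
    by (simp add: qp_Suc P fls_times_fps_to_fls fps_to_fls_power)
  moreover have "(P * (1 - fps_X ^ Suc n)) $ 0 = 1" using P(2) by simp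
  ultimately show ?case by blast
qed

lemma recip_eq:
  assumes "f * g = (1::int fls)" shows "fls_recip f = g"
  unfolding fls_recip_def
proof (rule the_equality)
  show "f * g = 1" by fact
  fix h assume h: "f * h = 1"
  have "h = (f * g) * h" using assms by simp
  also have "\<dots> = g * (f * h)" by (simp add: ac_simps)
  also have "\<dots> = g" using h by simp
  finally show "h = g" .
qed

lemma qp_recip: "qpoch fls_X n * fls_recip (qpoch fls_X n) = 1"
  and qp_recip_sub: "fls_subdegree (fls_recip (qpoch fls_X n)) \<ge> 0"
  and qp_recip_nz: "fls_recip (qpoch fls_X n) \<noteq> 0"
proof -
  obtain P where P: "qpoch fls_X n = fps_to_fls P" "P $ 0 = 1" using qp_fps by blast
  define g where "g = fps_right_inverse P 1"
  have "P * g = 1" unfolding g_def by (rule fps_right_inverse) (simp add: P)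
  then have e: "qpoch fls_X n * fps_to_fls g = 1"
    by (simp add: P fls_times_fps_to_fls[symmetric])
  then have r: "fls_recip (qpoch fls_X n) = fps_to_fls g" by (rule recip_eq)
  show "qpoch fls_X n * fls_recip (qpoch fls_X n) = 1" using e r by simp
  show "fls_subdegree (fls_recip (qpoch fls_X n)) \<ge> 0"
    using r fls_subdegree_fls_to_fps_gt0 by simp
  show "fls_recip (qpoch fls_X n) \<noteq> 0" using e r by auto
qed

lemma recip_1: "fls_recip (1::int fls) = 1"
  by (rule recip_eq) simp

fun gb :: "nat \<Rightarrow> nat \<Rightarrow> int fls" where
  "gb n 0 = 1"
| "gb 0 (Suc m) = 0"
| "gb (Suc n) (Suc m) = gb n m + fls_X ^ Suc m * gb n (Suc m)"

lemma gb_zero: "n < m \<Longrightarrow> gb n m = 0"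
proof (induction n arbitrary: m)
  case 0 then show ?case by (cases m) auto
next
  case (Suc n) then show ?case by (cases m) auto
qed

lemma gb_qp: "m \<le> n \<Longrightarrow> gb n m * qpoch fls_X m * qpoch fls_X (n - m) = qpoch fls_X n"
proof (induction n arbitrary: m)
  case 0 then show ?case by (simp add: qp_0)
next
  case (Suc n)
  show ?case
  proof (cases m)
    case 0 then show ?thesis by (simp add: qp_0)
  next
    case (Suc m')
    show ?thesis
    proof (cases "m' = n")
      case True
      have IH: "gb n n * qpoch fls_X n = qpoch fls_X n" using Suc.IH[of n] by (simp add: qp_0)
      have "gb (Suc n) m * qpoch fls_X m * qpoch fls_X (Suc n - m)
            = (gb n n * qpoch fls_X n) * (1 - fls_X ^ Suc n)"
        using Suc True by (simp add: gb_zero qp_Suc qp_0)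
      then show ?thesis using IH by (simp add: qp_Suc)
    next
      case False
      then have lt: "m' < n" using Suc Suc.prems by simp
      define Y where "Y = (fls_X ^ Suc m' :: int fls)"
      define W where "W = (fls_X ^ (n - m') :: int fls)"
      have nm: "n - m' = Suc (n - Suc m')" using lt by simp
      have q1: "qpoch fls_X (n - m') = qpoch fls_X (n - Suc m') * (1 - W)"
        unfolding W_def by (subst nm, subst qp_Suc, simp add: nm[symmetric])
      have A: "gb n m' * qpoch fls_X m' * qpoch fls_X (n - m') = qpoch fls_X n"
        using Suc.IH[of m'] lt by simp
      have B: "gb n (Suc m') * qpoch fls_X (Suc m') * qpoch fls_X (n - Suc m') = qpoch fls_X n"
        using Suc.IH[of "Suc m'"] lt by simp
      have YW: "Y * W = fls_X ^ Suc n" unfolding Y_def W_def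
        by (simp add: power_add[symmetric]) (use lt in \<open>simp add: Suc_diff_Suc\<close>)
      have "gb (Suc n) m * qpoch fls_X m * qpoch fls_X (Suc n - m)
          = (gb n m' + Y * gb n (Suc m')) * (qpoch fls_X m' * (1 - Y)) * qpoch fls_X (n - m')"
        using Suc by (simp add: qp_Suc Y_def)
      also have "\<dots> = (gb n m' * qpoch fls_X m' * qpoch fls_X (n - m')) * (1 - Y)
          + Y * (1 - W) * (gb n (Suc m') * (qpoch fls_X m' * (1 - Y)) * qpoch fls_X (n - Suc m'))"
        unfolding q1 by (simp add: algebra_simps)
      also have "\<dots> = qpoch fls_X n * (1 - Y) + Y * (1 - W) * qpoch fls_X n"
        using A B by (simp add: qp_Suc Y_def)
      also have "\<dots> = qpoch fls_X n * (1 - Y * W)" by (simp add: algebra_simps)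
      also have "\<dots> = qpoch fls_X (Suc n)" by (simp add: YW qp_Suc)
      finally show ?thesis .
    qed
  qed
qed


fun tri :: "nat \<Rightarrow> nat" where
  "tri 0 = 0" | "tri (Suc m) = tri m + m"

lemma tri2: "2 * tri m = m * (m - 1)"
proof (induction m)
  case 0 then show ?case by simp
next
  case (Suc m) then show ?case by (cases m) (simp_all add: algebra_simps)
qed

definition PP :: "nat \<Rightarrow> int fls \<Rightarrow> int fls" where
  "PP n z = (\<Sum>m\<le>n. (-1)^m * fls_X^(tri m) * gb n m * z^m)"

lemma PP_Suc: "PP (Suc n) z = (1 - z) * PP n (fls_X * z)"
proof -
  define c where "c m = ((-1)^m * fls_X^(tri m) :: int fls)" for m
  have PPc: "PP n z = (\<Sum>m\<le>n. c m * gb n m * z^m)" for n z unfolding PP_def c_def by simp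
  have cS: "c (Suc m) = - (c m * fls_X ^ m)" for m unfolding c_def by (simp add: power_add)
  have "PP (Suc n) z = c 0 * gb (Suc n) 0 * z^0 + (\<Sum>m\<le>n. c (Suc m) * gb (Suc n) (Suc m) * z^(Suc m))"
    unfolding PPc by (rule sum.atMost_Suc_shift)
  also have "\<dots> = 1 + (\<Sum>m\<le>n. c (Suc m) * gb n m * z^(Suc m)
      + c (Suc m) * (fls_X ^ Suc m * gb n (Suc m)) * z^(Suc m))"
    by (simp add: c_def algebra_simps)
  also have "\<dots> = 1 + (\<Sum>m\<le>n. c (Suc m) * gb n m * z^(Suc m))
      + (\<Sum>m\<le>n. c (Suc m) * (fls_X ^ Suc m * gb n (Suc m)) * z^(Suc m))"
    by (simp add: sum.distrib)
  finally have s1: "PP (Suc n) z = 1 + (\<Sum>m\<le>n. c (Suc m) * gb n m * z^(Suc m))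
      + (\<Sum>m\<le>n. c (Suc m) * (fls_X ^ Suc m * gb n (Suc m)) * z^(Suc m))" .
  have s2: "(\<Sum>m\<le>n. c (Suc m) * gb n m * z^(Suc m)) = - z * PP n (fls_X * z)"
    unfolding PPc sum_distrib_left
    by (intro sum.cong refl) (simp add: cS power_mult_distrib algebra_simps)
  have "1 + (\<Sum>m\<le>n. c (Suc m) * (fls_X ^ Suc m * gb n (Suc m)) * z^(Suc m))
      = (\<Sum>m\<le>Suc n. c m * fls_X ^ m * gb n m * z^m)"
    by (subst sum.atMost_Suc_shift) (simp add: c_def algebra_simps)
  also have "\<dots> = PP n (fls_X * z)"
    unfolding PPc by (simp add: gb_zero power_mult_distrib algebra_simps)
  finally have s3: "1 + (\<Sum>m\<le>n. c (Suc m) * (fls_X ^ Suc m * gb n (Suc m)) * z^(Suc m))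
      = PP n (fls_X * z)" .
  have "PP (Suc n) z = (1 + (\<Sum>m\<le>n. c (Suc m) * (fls_X ^ Suc m * gb n (Suc m)) * z^(Suc m)))
      + (\<Sum>m\<le>n. c (Suc m) * gb n m * z^(Suc m))" unfolding s1 by (simp add: ac_simps)
  also have "\<dots> = PP n (fls_X * z) + - z * PP n (fls_X * z)" unfolding s2 s3 ..
  finally show ?thesis by (simp add: algebra_simps)
qed

lemma qbin: "PP n z = (\<Prod>i<n. 1 - z * fls_X ^ i)"
proof (induction n arbitrary: z)
  case 0 then show ?case by (simp add: PP_def)
next
  case (Suc n)
  show ?case unfolding PP_Suc Suc.IH prod.lessThan_Suc_shift
    by (simp add: algebra_simps)
qed





definition RR :: "nat \<Rightarrow> int fls" where "RR m = fls_recip (qpoch fls_X m)"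

definition UU :: "int \<Rightarrow> int \<Rightarrow> int fls" where
  "UU k j = fls_const ((-1) ^ nat (k + j)) * fls_X_intpow (binom2 k + binom2 j)
        * RR (nat (k + j)) * RR (nat (k - j))"

lemma binom2_2: "2 * binom2 j = j * (j + 1)"
  unfolding binom2_def by simp

lemma binom2_nonneg: "binom2 j \<ge> 0"
proof -
  have "j * (j + 1) \<ge> 0"
    by (cases "j \<ge> 0") (simp_all add: mult_nonpos_nonpos)
  then show ?thesis using binom2_2[of j] by simp
qed

lemma exp_ident: "binom2 k + binom2 (int m - k) = k * k + int (tri m) + int m * (1 - k)"
proof -
  have t: "2 * int (tri m) = int m * (int m - 1)"
  proof -
    have "int (2 * tri m) = int (m * (m - 1))" by (simp only: tri2)
    then show ?thesis by (cases m) (simp_all add: algebra_simps)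
  qed
  have "2 * (binom2 k + binom2 (int m - k)) = 2 * (k * k + int (tri m) + int m * (1 - k))"
    using binom2_2[of k] binom2_2[of "int m - k"] t by (simp add: algebra_simps)
  then show ?thesis by simp
qed

lemma RR_0: "RR 0 = 1" unfolding RR_def by (simp add: qp_0 recip_1)

lemma gb_RR: "m \<le> n \<Longrightarrow> qpoch fls_X n * RR m * RR (n - m) = gb n m"
proof -
  assume mn: "m \<le> n"
  have "qpoch fls_X n * RR m * RR (n - m)
      = gb n m * (qpoch fls_X m * RR m) * (qpoch fls_X (n - m) * RR (n - m))"
    using gb_qp[OF mn] by (simp add: ac_simps)
  also have "\<dots> = gb n m" by (simp add: RR_def qp_recip)
  finally show ?thesis .
qed

lemma UU_sum: "k \<ge> 0 \<Longrightarrow> (\<Sum>j\<in>{-k..k}. UU k j) = (if k = 0 then 1 else 0)"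
proof (cases "k = 0")
  case True
  then show ?thesis by (simp add: UU_def RR_0 binom2_def)
next
  case False
  assume k0: "k \<ge> 0"
  define K where "K = nat k"
  have kK: "k = int K" and K1: "K \<ge> 1" using k0 False K_def by auto
  define z where "z = (fls_X_intpow (1 - k) :: int fls)"
  have reidx: "(\<Sum>j\<in>{-k..k}. UU k j) = (\<Sum>m\<in>{..2*K}. UU k (int m - k))"
    by (rule sum.reindex_bij_witness[where i="\<lambda>m. int m - k" and j="\<lambda>j. nat (j + k)"])
       (auto simp: kK)
  have trm: "qpoch fls_X (2*K) * UU k (int m - k)
      = fls_X_intpow (k * k) * ((-1)^m * fls_X^(tri m) * gb (2*K) m * z^m)" if m: "m \<le> 2*K" for m
  proof -
    have n1: "nat (k + (int m - k)) = m" and n2: "nat (k - (int m - k)) = 2*K - m"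
      using m kK by auto
    have X: "fls_X_intpow (binom2 k + binom2 (int m - k)) = fls_X_intpow (k * k) * fls_X^(tri m) * (z^m :: int fls)"
      unfolding exp_ident z_def fls_X_power_conv_shift_1 fls_X_intpow_power
      by (simp only: fls_X_intpow_times_fls_X_intpow mult.commute[of "int m"])
    have "qpoch fls_X (2*K) * UU k (int m - k)
       = fls_const ((-1)^m) * fls_X_intpow (binom2 k + binom2 (int m - k))
         * (qpoch fls_X (2*K) * RR m * RR (2*K - m))"
      unfolding UU_def n1 n2 by (simp add: ac_simps)
    also have "\<dots> = fls_const ((-1)^m) * fls_X_intpow (binom2 k + binom2 (int m - k)) * gb (2*K) m"
      using gb_RR[OF m] by simp
    finally show ?thesis unfolding X by (simp add: fls_const_power ac_simps)
  qed
  have "qpoch fls_X (2*K) * (\<Sum>j\<in>{-k..k}. UU k j)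
       = fls_X_intpow (k * k) * PP (2*K) z"
    unfolding reidx sum_distrib_left PP_def
    by (intro sum.cong refl) (simp add: trm)
  also have "PP (2*K) z = 0"
  proof -
    have "z * fls_X ^ (K - 1) = fls_X_intpow ((1 - k) + int (K - 1))"
      unfolding z_def fls_X_power_conv_shift_1
      by (simp only: fls_X_intpow_times_fls_X_intpow)
    also have "(1 - k) + int (K - 1) = 0" using K1 kK by simp
    finally have "z * fls_X ^ (K - 1) = 1" by simp
    then have "\<exists>i\<in>{..<2*K}. 1 - z * fls_X ^ i = 0" using K1
      by (intro bexI[of _ "K - 1"]) auto
    then show ?thesis unfolding qbin by (simp add: prod_zero)
  qed
  finally have "qpoch fls_X (2*K) * (\<Sum>j\<in>{-k..k}. UU k j) = 0" by simp
  moreover have "qpoch fls_X (2*K) \<noteq> 0" using qp_recip[of "2*K"] by auto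
  ultimately show ?thesis using False by simp
qed





definition TT :: "(int \<Rightarrow> int fls) \<Rightarrow> int \<Rightarrow> int \<Rightarrow> int fls" where
  "TT a j k = a (- k - 1) * fls_const ((-1) ^ nat (k + j))
        * fls_X_intpow (binom2 k + binom2 j)
        * fls_recip (qpoch fls_X (nat (k + j))) * fls_recip (qpoch fls_X (nat (k - j)))"

lemma res_eq: "res_r a j = - fls_infsum (TT a j) {k. \<bar>j\<bar> \<le> k}"
  unfolding res_r_def TT_def by simp

lemma TT_UU: "TT a j k = a (- k - 1) * UU k j"
  unfolding TT_def UU_def RR_def by (simp add: mult.assoc)

lemma lb_ident: "- ((- k - 1) * (- k - 1 + 3) div 2) + binom2 k = k + 1"
proof -
  have "(- k - 1) * (- k - 1 + 3) = 2 * (binom2 k - k - 1)"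
    using binom2_2[of k] by (simp add: algebra_simps)
  then have "(- k - 1) * (- k - 1 + 3) div 2 = binom2 k - k - 1" by simp
  then show ?thesis by simp
qed

lemma UU_nz: "UU k j \<noteq> 0" and UU_sub: "fls_subdegree (UU k j) \<ge> binom2 k"
proof -
  have c: "fls_const ((-1::int) ^ nat (k + j)) \<noteq> 0" by (simp add: fls_const_nonzero)
  have r1: "RR (nat (k + j)) \<noteq> 0" and r2: "RR (nat (k - j)) \<noteq> 0"
    unfolding RR_def by (rule qp_recip_nz)+
  have s1: "fls_subdegree (RR (nat (k + j))) \<ge> 0" and s2: "fls_subdegree (RR (nat (k - j))) \<ge> 0"
    unfolding RR_def by (rule qp_recip_sub)+
  have x: "(fls_X_intpow (binom2 k + binom2 j) :: int fls) \<noteq> 0" by (rule fls_X_intpow_nonzero)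
  have p1: "fls_const ((-1::int) ^ nat (k + j)) * fls_X_intpow (binom2 k + binom2 j) \<noteq> 0"
    using c x by simp
  have p2: "fls_const ((-1::int) ^ nat (k + j)) * fls_X_intpow (binom2 k + binom2 j) * RR (nat (k + j)) \<noteq> 0"
    using p1 r1 by simp
  show "UU k j \<noteq> 0" unfolding UU_def using p2 r2 by simp
  have "fls_subdegree (UU k j) = (binom2 k + binom2 j) + fls_subdegree (RR (nat (k + j)))
      + fls_subdegree (RR (nat (k - j)))"
    unfolding UU_def using p1 p2 r1 r2 c x
    by (simp del: fls_subdegree_fls_X_intpow)
  then show "fls_subdegree (UU k j) \<ge> binom2 k" using s1 s2 binom2_nonneg[of j] by simp
qed

lemma TT_vanish:
  assumes C: "\<forall>n<0. a n \<noteq> 0 \<longrightarrow> fls_subdegree (a n) \<ge> - (n * (n + 3) div 2) + C"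
    and jk: "\<bar>j\<bar> \<le> k" and n: "n < k + 1 + C"
  shows "TT a j k $$ n = 0"
proof (cases "a (- k - 1) = 0")
  case True then show ?thesis by (simp add: TT_UU)
next
  case False
  have k0: "k \<ge> 0" using jk by simp
  have neg: "- k - 1 < 0" using k0 by simp
  have "fls_subdegree (a (- k - 1)) \<ge> - ((- k - 1) * (- k - 1 + 3) div 2) + C"
    using C[rule_format, OF neg False] .
  then have sa: "fls_subdegree (a (- k - 1)) + binom2 k \<ge> k + 1 + C" using lb_ident[of k] by linarith
  have "fls_subdegree (TT a j k) = fls_subdegree (a (- k - 1)) + fls_subdegree (UU k j)"
    unfolding TT_UU using False UU_nz by simp
  then have "fls_subdegree (TT a j k) > n" using sa UU_sub[of k j] n by simp
  then show ?thesis by simp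
qed


theorem proposition5p6:
  fixes a :: "int \<Rightarrow> int fls"
  assumes "lower_bound_cond a"
  shows "fls_summable (res_r a) (UNIV :: int set) \<and> fls_has_sum (res_r a) (UNIV :: int set) (- a (-1))"
proof -
  obtain C where C: "\<forall>n<0. a n \<noteq> 0 \<longrightarrow> fls_subdegree (a n) \<ge> - (n * (n + 3) div 2) + C"
    using assms unfolding lower_bound_cond_def by blast
  define K where "K j = {k::int. \<bar>j\<bar> \<le> k}" for j
  have van: "TT a j k $$ n = 0" if "\<bar>j\<bar> \<le> k" "n < k + 1 + C" for j k n
    using TT_vanish[OF C that] .
  have LF: "finite {k\<in>K j. \<exists>n<N. TT a j k $$ n \<noteq> 0}" for j N
  proof (rule finite_subset)
    show "{k\<in>K j. \<exists>n<N. TT a j k $$ n \<noteq> 0} \<subseteq> {\<bar>j\<bar>..N - C}"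
    proof
      fix k assume "k \<in> {k\<in>K j. \<exists>n<N. TT a j k $$ n \<noteq> 0}"
      then obtain n where k: "\<bar>j\<bar> \<le> k" "n < N" "TT a j k $$ n \<noteq> 0" unfolding K_def by blast
      then have "\<not> n < k + 1 + C" using van by blast
      then show "k \<in> {\<bar>j\<bar>..N - C}" using k by simp
    qed
  qed simp
  have HS: "fls_has_sum (TT a j) (K j) (fls_infsum (TT a j) (K j))" for j
  proof -
    obtain S where S: "fls_has_sum (TT a j) (K j) S" using has_sum_exists[OF LF] by blast
    then show ?thesis using has_sum_infsum[OF S] by simp
  qed
  have res: "res_r a j = - fls_infsum (TT a j) (K j)" for j
    unfolding res_eq K_def ..
  have rvan: "res_r a j $$ n = 0" if "n < \<bar>j\<bar> + 1 + C" for j n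
  proof -
    have "fls_infsum (TT a j) (K j) $$ n = sum (TT a j) {} $$ n"
    proof (rule has_sum_coeff[OF HS, where N = "\<bar>j\<bar> + 1 + C"])
      show "\<forall>i\<in>K j - {}. \<forall>n<\<bar>j\<bar> + 1 + C. TT a j i $$ n = 0"
        unfolding K_def by (auto intro!: van)
    qed (use that in auto)
    then show ?thesis unfolding res by simp
  qed
  have main: "fls_has_sum (res_r a) UNIV (- a (-1))"
  proof (rule has_sum_intro)
    fix N
    define M where "M = max 0 (N - C)"
    have M0: "M \<ge> 0" unfolding M_def by simp
    show "\<exists>J0. finite J0 \<and> J0 \<subseteq> UNIV \<and> (\<forall>i\<in>UNIV - J0. \<forall>n<N. res_r a i $$ n = 0)
              \<and> (\<forall>n<N. (- a (-1)) $$ n = sum (res_r a) J0 $$ n)"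
    proof (rule exI[of _ "{-M..M}"], intro conjI)
      show "finite {-M..M}" by simp
      show "{-M..M} \<subseteq> UNIV" by simp
      show "\<forall>i\<in>UNIV - {-M..M}. \<forall>n<N. res_r a i $$ n = 0"
      proof (intro ballI allI impI)
        fix i n assume "i \<in> UNIV - {-M..M}" "n < N"
        then have "n < \<bar>i\<bar> + 1 + C" unfolding M_def by auto
        then show "res_r a i $$ n = 0" by (rule rvan)
      qed
      show "\<forall>n<N. (- a (-1)) $$ n = sum (res_r a) {-M..M} $$ n"
      proof (intro allI impI)
        fix n assume nN: "n < N"
        define g where "g j k = TT a j k $$ n" for j k
        have inner: "fls_infsum (TT a j) (K j) $$ n = (\<Sum>k\<in>{\<bar>j\<bar>..M}. g j k)" for j
        proof -
          have "fls_infsum (TT a j) (K j) $$ n = sum (TT a j) {\<bar>j\<bar>..M} $$ n"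
          proof (rule has_sum_coeff[OF HS, where N = N])
            show "\<forall>i\<in>K j - {\<bar>j\<bar>..M}. \<forall>n<N. TT a j i $$ n = 0"
            proof (intro ballI allI impI)
              fix k n' assume k: "k \<in> K j - {\<bar>j\<bar>..M}" and n': "n' < N"
              then have "\<bar>j\<bar> \<le> k" "k > M" unfolding K_def by auto
              then show "TT a j k $$ n' = 0" using n' unfolding M_def by (intro van) auto
            qed
          qed (use nN in \<open>auto simp: K_def\<close>)
          then show ?thesis unfolding g_def fls_nth_sum .
        qed
        have "sum (res_r a) {-M..M} $$ n = - (\<Sum>j\<in>{-M..M}. \<Sum>k\<in>{\<bar>j\<bar>..M}. g j k)"
          unfolding fls_nth_sum res by (simp add: inner sum_negf)
        also have "(\<Sum>j\<in>{-M..M}. \<Sum>k\<in>{\<bar>j\<bar>..M}. g j k)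
            = (\<Sum>j\<in>{-M..M}. \<Sum>k\<in>{k\<in>{0..M}. \<bar>j\<bar> \<le> k}. g j k)"
          by (intro sum.cong refl) auto
        also have "\<dots> = (\<Sum>k\<in>{0..M}. \<Sum>j\<in>{j\<in>{-M..M}. \<bar>j\<bar> \<le> k}. g j k)"
          by (rule sum.swap_restrict) simp_all
        also have "\<dots> = (\<Sum>k\<in>{0..M}. \<Sum>j\<in>{-k..k}. g j k)"
          by (intro sum.cong refl) auto
        also have "\<dots> = (\<Sum>k\<in>{0..M}. (if k = 0 then a (-1) $$ n else 0))"
        proof (intro sum.cong refl)
          fix k assume k: "k \<in> {0..M}"
          have "(\<Sum>j\<in>{-k..k}. g j k) = (a (- k - 1) * (\<Sum>j\<in>{-k..k}. UU k j)) $$ n"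
            unfolding g_def TT_UU sum_distrib_left fls_nth_sum ..
          also have "\<dots> = (if k = 0 then a (-1) $$ n else 0)"
            using k by (simp add: UU_sum)
          finally show "(\<Sum>j\<in>{-k..k}. g j k) = (if k = 0 then a (-1) $$ n else 0)" .
        qed
        also have "\<dots> = a (-1) $$ n" using M0 by simp
        finally show "(- a (-1)) $$ n = sum (res_r a) {-M..M} $$ n" by simp
      qed
    qed
  qed
  then show ?thesis unfolding fls_summable_def by blast
qed


end
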